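(* If a non-failed Boolean CSP is closed under the applications of (each of) the rules of the proof system BOOL', then it is hyper-arc consistent.
   Context: A Boolean CSP is $\langle \mathcal C; x_1\in D_1,\dots,x_n\in D_n\rangle$ with $D_i\subseteq\{0,1\}$ and $\mathcal C$ a finite set of Boolean constraints, each of the forms $u=v$ ($\{(0,0),(1,1)\}$), $\neg u=v$ ($\{(0,1),(1,0)\}$), $u\wedge v=w$ ($\{(0,0,0),(0,1,0),(1,0,0),(1,1,1)\}$), $u\vee v=w$ ($\{(0,0,0),(0,1,1),(1,0,1),(1,1,1)\}$) on distinct variables; constraints are always understood as restricted to the current domains. $x=d$ means $x\in\{d\}$. A CSP is failed if some domain is empty. A constraint is solved if it equals the product of the domains of its variables; $\phi$ is a reformulation of $\psi$ if removing solved constraints from both yields the same CSP. The proof system BOOL' consists of the rules (constraint, premise $\rightarrow$ conclusion; $x,y,z$ schematic): EQU1: $x=y$, $x=1\rightarrow y=1$; EQU2: $x=y$, $y=1\rightarrow x=1$; EQU3: $x=y$, $x=0\rightarrow y=0$; EQU4: $x=y$, $y=0\rightarrow x=0$; NOT1: $\neg x=y$, $x=1\rightarrow y=0$; NOT2: $\neg x=y$, $x=0\rightarrow y=1$; NOT3: $\neg x=y$, $y=1\rightarrow x=0$; NOT4: $\neg x=y$, $y=0\rightarrow x=1$; AND1': $x\wedge y=z$, $x=1\rightarrow$ constraint $y=z$; AND2': $x\wedge y=z$, $y=1\rightarrow$ constraint $x=z$; AND3': $x\wedge y=z$, $z=1\rightarrow x=1$; AND4: $x\wedge y=z$, $x=0\rightarrow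 z=0$; AND5: $x\wedge y=z$, $y=0\rightarrow z=0$; AND6': $x\wedge y=z$, $z=1\rightarrow y=1$; OR1: $x\vee y=z$, $x=1\rightarrow z=1$; OR2': $x\vee y=z$, $x=0\rightarrow$ constraint $y=z$; OR3': $x\vee y=z$, $y=0\rightarrow$ constraint $x=z$; OR4': $x\vee y=z$, $z=0\rightarrow x=0$; OR5: $x\vee y=z$, $y=1\rightarrow z=1$; OR6': $x\vee y=z$, $z=0\rightarrow y=0$. On CSPs: a rule with constraint $c$ and premise $X=s$ is applicable to a CSP containing (an instance of) $c$ in which each variable of $X$ has domain exactly $\{s_i\}$. If the conclusion is $Y=t$, the result removes $c$ and replaces the domain $D$ of each $y_j\in Y$ by $D\cap\{t_j\}$; if the conclusion is a constraint, the result replaces $c$ by that equality constraint (on the corresponding variables) and leaves domains unchanged. An application is relevant if its result is not a reformulation of the original CSP. A CSP is closed under the applications of a rule $R$ if $R$ cannot be applied or no application of it is relevant. A constraint is hyper-arc consistent if for every variable of it each value in its domain participates in a solution to the constraint (restricted to current domains); a CSP is hyper-arc consistent if every constraint of it is. *)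

theory Defs
  imports Main
begin

text \<open>Boolean values are rendered as bool (True = 1, False = 0).\<close>

datatype 'v constr =
    CEq 'v 'v
  | CNot 'v 'v
  | CAnd 'v 'v 'v
  | COr 'v 'v 'v

fun scheme :: "'v constr \<Rightarrow> 'v list" where
  "scheme (CEq u v) = [u, v]"
| "scheme (CNot u v) = [u, v]"
| "scheme (CAnd u v w) = [u, v, w]"
| "scheme (COr u v w) = [u, v, w]"

fun sat :: "'v constr \<Rightarrow> ('v \<Rightarrow> bool) \<Rightarrow> bool" where
  "sat (CEq u v) a = (a u = a v)"
| "sat (CNot u v) a = ((\<not> a u) = a v)"
| "sat (CAnd u v w) a = ((a u \<and> a v) = a w)"
| "sat (COr u v w) a = ((a u \<or> a v) = a w)"

text \<open>A Boolean CSP: a set of constraints together with domains (subsets of {0,1}).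
  The variables x1..xn of the CSP form a separate finite set X.\<close>
type_synonym 'v csp = "'v constr set \<times> ('v \<Rightarrow> bool set)"

definition well_formed :: "'v set \<Rightarrow> 'v csp \<Rightarrow> bool" where
  "well_formed X \<phi> \<longleftrightarrow> finite X \<and> finite (fst \<phi>) \<and>
     (\<forall>c \<in> fst \<phi>. distinct (scheme c) \<and> set (scheme c) \<subseteq> X)"

definition failed :: "'v set \<Rightarrow> 'v csp \<Rightarrow> bool" where
  "failed X \<phi> \<longleftrightarrow> (\<exists>x \<in> X. snd \<phi> x = {})"

definition in_doms :: "('v \<Rightarrow> bool set) \<Rightarrow> 'v constr \<Rightarrow> ('v \<Rightarrow> bool) \<Rightarrow> bool" where
  "in_doms D c a \<longleftrightarrow> (\<forall>v \<in> set (scheme c). a v \<in> D v)"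

definition restr :: "('v \<Rightarrow> bool set) \<Rightarrow> 'v constr \<Rightarrow> 'v list \<times> bool list set" where
  "restr D c = (scheme c, {map a (scheme c) | a. sat c a \<and> in_doms D c a})"

definition solved :: "('v \<Rightarrow> bool set) \<Rightarrow> 'v constr \<Rightarrow> bool" where
  "solved D c \<longleftrightarrow> (\<forall>a. in_doms D c a \<longrightarrow> sat c a)"

definition reformulation :: "'v set \<Rightarrow> 'v csp \<Rightarrow> 'v csp \<Rightarrow> bool" where
  "reformulation X \<phi> \<psi> \<longleftrightarrow>
     (\<forall>x \<in> X. snd \<phi> x = snd \<psi> x) \<and>
     restr (snd \<phi>) ` {c \<in> fst \<phi>. \<not> solved (snd \<phi>) c}
       = restr (snd \<psi>) ` {c \<in> fst \<psi>. \<not> solved (snd \<psi>) c}"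

datatype rule =
    EQU1 | EQU2 | EQU3 | EQU4
  | NOT1 | NOT2 | NOT3 | NOT4
  | AND1' | AND2' | AND3' | AND4 | AND5 | AND6'
  | OR1 | OR2' | OR3' | OR4' | OR5 | OR6'

datatype 'v conclusion = CDom "('v \<times> bool) list" | CCon "'v constr"

fun inst :: "rule \<Rightarrow> 'v constr \<Rightarrow> (('v \<times> bool) list \<times> 'v conclusion) option" where
  "inst EQU1 (CEq x y) = Some ([(x, True)], CDom [(y, True)])"
| "inst EQU2 (CEq x y) = Some ([(y, True)], CDom [(x, True)])"
| "inst EQU3 (CEq x y) = Some ([(x, False)], CDom [(y, False)])"
| "inst EQU4 (CEq x y) = Some ([(y, False)], CDom [(x, False)])"
| "inst NOT1 (CNot x y) = Some ([(x, True)], CDom [(y, False)])"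
| "inst NOT2 (CNot x y) = Some ([(x, False)], CDom [(y, True)])"
| "inst NOT3 (CNot x y) = Some ([(y, True)], CDom [(x, False)])"
| "inst NOT4 (CNot x y) = Some ([(y, False)], CDom [(x, True)])"
| "inst AND1' (CAnd x y z) = Some ([(x, True)], CCon (CEq y z))"
| "inst AND2' (CAnd x y z) = Some ([(y, True)], CCon (CEq x z))"
| "inst AND3' (CAnd x y z) = Some ([(z, True)], CDom [(x, True)])"
| "inst AND4 (CAnd x y z) = Some ([(x, False)], CDom [(z, False)])"
| "inst AND5 (CAnd x y z) = Some ([(y, False)], CDom [(z, False)])"
| "inst AND6' (CAnd x y z) = Some ([(z, True)], CDom [(y, True)])"
| "inst OR1 (COr x y z) = Some ([(x, True)], CDom [(z, True)])"
| "inst OR2' (COr x y z) = Some ([(x, False)], CCon (CEq y z))"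
| "inst OR3' (COr x y z) = Some ([(y, False)], CCon (CEq x z))"
| "inst OR4' (COr x y z) = Some ([(z, False)], CDom [(x, False)])"
| "inst OR5 (COr x y z) = Some ([(y, True)], CDom [(z, True)])"
| "inst OR6' (COr x y z) = Some ([(z, False)], CDom [(y, False)])"
| "inst _ _ = None"

fun apply_concl :: "'v constr \<Rightarrow> 'v conclusion \<Rightarrow> 'v csp \<Rightarrow> 'v csp" where
  "apply_concl c (CDom L) (C, D) =
     (C - {c}, \<lambda>v. D v \<inter> {t. \<forall>s. (v, s) \<in> set L \<longrightarrow> t = s})"
| "apply_concl c (CCon c') (C, D) = (insert c' (C - {c}), D)"

definition applies :: "rule \<Rightarrow> 'v csp \<Rightarrow> 'v csp \<Rightarrow> bool" where
  "applies R \<phi> \<psi> \<longleftrightarrow> (\<exists>c P K. c \<in> fst \<phi> \<and> inst R c = Some (P, K) \<and>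
       (\<forall>(x, s) \<in> set P. snd \<phi> x = {s}) \<and> \<psi> = apply_concl c K \<phi>)"

definition relevant :: "'v set \<Rightarrow> 'v csp \<Rightarrow> 'v csp \<Rightarrow> bool" where
  "relevant X \<phi> \<psi> \<longleftrightarrow> \<not> reformulation X \<psi> \<phi>"

definition closed_under :: "'v set \<Rightarrow> rule \<Rightarrow> 'v csp \<Rightarrow> bool" where
  "closed_under X R \<phi> \<longleftrightarrow> (\<forall>\<psi>. applies R \<phi> \<psi> \<longrightarrow> \<not> relevant X \<phi> \<psi>)"

definition hac_constr :: "('v \<Rightarrow> bool set) \<Rightarrow> 'v constr \<Rightarrow> bool" where
  "hac_constr D c \<longleftrightarrow> (\<forall>v \<in> set (scheme c). \<forall>d \<in> D v.
      \<exists>a. a v = d \<and> in_doms D c a \<and> sat c a)"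

definition hyper_arc_consistent :: "'v csp \<Rightarrow> bool" where
  "hyper_arc_consistent \<phi> \<longleftrightarrow> (\<forall>c \<in> fst \<phi>. hac_constr (snd \<phi>) c)"

end

theory Submission
  imports Defs
begin

lemma hac3:
  assumes d: "distinct [x,y,z]" and sc: "scheme c = [x,y,z]"
    and sa: "\<And>a. sat c a = f (a x) (a y) (a z)"
  shows "hac_constr D c \<longleftrightarrow>
    (\<forall>d\<in>D x. \<exists>q\<in>D y. \<exists>r\<in>D z. f d q r) \<and> (\<forall>d\<in>D y. \<exists>p\<in>D x. \<exists>r\<in>D z. f p d r) \<and>
    (\<forall>d\<in>D z. \<exists>p\<in>D x. \<exists>q\<in>D y. f p q d)" (is "?L = ?R")
proof
  assume L: ?L
  show ?R
    using L unfolding hac_constr_def in_doms_def sc sa by fastforce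
next
  assume R: ?R
  let ?a = "\<lambda>p q r w. if w = x then p else if w = y then q else r"
  have A: "?a p q r x = p" "?a p q r y = q" "?a p q r z = r" for p q r
    using d by auto
  have nd: "x\<noteq>y" "y\<noteq>x" "x\<noteq>z" "z\<noteq>x" "y\<noteq>z" "z\<noteq>y" using d by auto
  show ?L unfolding hac_constr_def in_doms_def sc sa
  proof (intro ballI)
    fix v d assume v: "v \<in> set [x,y,z]" and dv: "d \<in> D v"
    show "\<exists>a. a v = d \<and> (\<forall>v\<in>set [x, y, z]. a v \<in> D v) \<and> f (a x) (a y) (a z)"
    proof -
      have "v = x \<or> v = y \<or> v = z" using v by auto
      then show ?thesis
      proof (elim disjE)
        assume [simp]: "v = x"
        have dx: "d \<in> D x" using dv by simp
        obtain q r where "q \<in> D y" "r \<in> D z" "f d q r" using R dx by auto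
        then show ?thesis by (intro exI[of _ "?a d q r"]) (simp add: A dx nd)
      next
        assume [simp]: "v = y"
        have dx: "d \<in> D y" using dv by simp
        obtain p r where "p \<in> D x" "r \<in> D z" "f p d r" using R dx by auto
        then show ?thesis by (intro exI[of _ "?a p d r"]) (simp add: A dx nd)
      next
        assume [simp]: "v = z"
        have dx: "d \<in> D z" using dv by simp
        obtain p q where "p \<in> D x" "q \<in> D y" "f p q d" using R dx by auto
        then show ?thesis by (intro exI[of _ "?a p q d"]) (simp add: A dx nd)
      qed
    qed
  qed
qed

lemma hac2:
  assumes d: "x \<noteq> y" and sc: "scheme c = [x,y]"
    and sa: "\<And>a. sat c a = f (a x) (a y)"
  shows "hac_constr D c \<longleftrightarrow>
    (\<forall>d\<in>D x. \<exists>q\<in>D y. f d q) \<and> (\<forall>d\<in>D y. \<exists>p\<in>D x. f p d)" (is "?L = ?R")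
proof
  assume L: ?L
  show ?R
    using L unfolding hac_constr_def in_doms_def sc sa by fastforce
next
  assume R: ?R
  let ?a = "\<lambda>p q w. if w = x then p else q"
  have A: "?a p q x = p" "?a p q y = q" for p q
    using d by auto
  have nd: "x\<noteq>y" "y\<noteq>x" using d by auto
  show ?L unfolding hac_constr_def in_doms_def sc sa
  proof (intro ballI)
    fix v d assume v: "v \<in> set [x,y]" and dv: "d \<in> D v"
    show "\<exists>a. a v = d \<and> (\<forall>v\<in>set [x, y]. a v \<in> D v) \<and> f (a x) (a y)"
    proof -
      have "v = x \<or> v = y" using v by auto
      then show ?thesis
      proof (elim disjE)
        assume [simp]: "v = x"
        have dx: "d \<in> D x" using dv by simp
        obtain q where "q \<in> D y" "f d q" using R dx by auto
        then show ?thesis by (intro exI[of _ "?a d q"]) (simp add: A dx nd)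
      next
        assume [simp]: "v = y"
        have dx: "d \<in> D y" using dv by simp
        obtain p where "p \<in> D x" "f p d" using R dx by auto
        then show ?thesis by (intro exI[of _ "?a p d"]) (simp add: A dx nd)
      qed
    qed
  qed
qed

lemma solved_eq:
  assumes "y \<noteq> z"
  shows "solved D (CEq y z) \<longleftrightarrow> (\<forall>p\<in>D y. \<forall>q\<in>D z. p = q)"
proof
  assume S: "solved D (CEq y z)"
  show "\<forall>p\<in>D y. \<forall>q\<in>D z. p = q"
  proof (intro ballI)
    fix p q assume "p \<in> D y" "q \<in> D z"
    then have "in_doms D (CEq y z) (\<lambda>w. if w = y then p else q)"
      using assms by (simp add: in_doms_def)
    then show "p = q" using S assms unfolding solved_def by fastforce
  qed
qed (auto simp: solved_def in_doms_def)

lemma L_dom: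
  assumes cl: "closed_under X R (C, D)" and c: "c \<in> C"
    and i: "inst R c = Some (P, CDom L)" and pr: "\<forall>(x, s) \<in> set P. D x = {s}"
    and vt: "(v, t) \<in> set L" and vX: "v \<in> X"
  shows "D v \<subseteq> {t}"
proof -
  have "applies R (C, D) (apply_concl c (CDom L) (C, D))"
    unfolding applies_def using c i pr by fastforce
  then have "reformulation X (apply_concl c (CDom L) (C, D)) (C, D)"
    using cl unfolding closed_under_def relevant_def by blast
  then have "D v \<inter> {t'. \<forall>s. (v, s) \<in> set L \<longrightarrow> t' = s} = D v"
    using vX unfolding reformulation_def by simp
  then show ?thesis using vt by blast
qed

lemma L_con:
  assumes cl: "closed_under X R (C, D)" and c: "c \<in> C"
    and i: "inst R c = Some (P, CCon c')" and pr: "\<forall>(x, s) \<in> set P. D x = {s}"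
    and ns: "\<not> solved D c'"
  shows "\<exists>c''\<in>C. \<not> solved D c'' \<and> restr D c'' = restr D c'"
proof -
  have "applies R (C, D) (apply_concl c (CCon c') (C, D))"
    unfolding applies_def using c i pr by fastforce
  then have "reformulation X (apply_concl c (CCon c') (C, D)) (C, D)"
    using cl unfolding closed_under_def relevant_def by blast
  then have E: "restr D ` {e \<in> insert c' (C - {c}). \<not> solved D e} = restr D ` {c \<in> C. \<not> solved D c}"
    unfolding reformulation_def apply_concl.simps fst_conv snd_conv by (rule conjunct2)
  have "restr D c' \<in> restr D ` {e \<in> insert c' (C - {c}). \<not> solved D e}" using ns by blast
  then have "restr D c' \<in> restr D ` {c \<in> C. \<not> solved D c}" by (simp only: E)
  then show ?thesis by auto
qed

lemma restr_eq_CEq: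
  assumes yz: "y \<noteq> z" and ny: "D y \<noteq> {}" and nz: "D z \<noteq> {}"
    and r: "restr D c = restr D (CEq y z)"
  shows "c = CEq y z"
proof -
  have RR: "scheme c = [y, z] \<and> {map a (scheme c) | a. sat c a \<and> in_doms D c a}
     = {map a [y,z] | a. sat (CEq y z) a \<and> in_doms D (CEq y z) a}"
    using r unfolding restr_def prod.inject scheme.simps .
  note sc = conjunct1[OF RR] and T = conjunct2[OF RR]
  obtain p q where p: "p \<in> D y" and q: "q \<in> D z" using ny nz by blast
  show ?thesis
  proof (cases c)
    case (CEq u v) then show ?thesis using sc by simp
  next
    case (CNot u v)
    then have [simp]: "c = CNot y z" using sc by simp
    show ?thesis
    proof (cases "p = q")
      case True
      have "[p, p] \<in> {map a [y,z] | a. sat (CEq y z) a \<and> in_doms D (CEq y z) a}"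
        using p q True by (auto simp: in_doms_def intro!: exI[of _ "\<lambda>_. p"])
      then have "[p, p] \<in> {map a (scheme c) | a. sat c a \<and> in_doms D c a}" by (simp only: T)
      then obtain a where "[p, p] = [a y, a z]" "(\<not> a y) = a z" by auto
      then show ?thesis by blast
    next
      case False
      have "[p, q] \<in> {map a (scheme c) | a. sat c a \<and> in_doms D c a}"
        using p q False yz by (auto simp: in_doms_def intro!: exI[of _ "\<lambda>w. if w = y then p else q"])
      then have "[p, q] \<in> {map a [y,z] | a. sat (CEq y z) a \<and> in_doms D (CEq y z) a}" by (simp only: T)
      then obtain a where "[p, q] = [a y, a z]" "a y = a z" by auto
      then show ?thesis using False by blast
    qed
  next
    case (CAnd u v w) then show ?thesis using sc by simp
  next
    case (COr u v w) then show ?thesis using sc by simp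
  qed
qed

lemma bool_set_cases: "(S::bool set) \<noteq> {} \<Longrightarrow> S = {True} \<or> S = {False} \<or> S = UNIV"
proof -
  assume ne: "S \<noteq> {}"
  have e: "S = {x. (x \<and> True \<in> S) \<or> (\<not> x \<and> False \<in> S)}"
  proof (rule set_eqI)
    fix x show "x \<in> S \<longleftrightarrow> x \<in> {x. (x \<and> True \<in> S) \<or> (\<not> x \<and> False \<in> S)}" by (cases x) auto
  qed
  show ?thesis
  proof (cases "True \<in> S"; cases "False \<in> S")
    assume "True \<in> S" "False \<in> S" then show ?thesis by (subst e) auto
  next
    assume "True \<in> S" "False \<notin> S" then show ?thesis by (subst e) auto
  next
    assume "True \<notin> S" "False \<in> S" then show ?thesis by (subst e) auto
  next
    assume "True \<notin> S" "False \<notin> S" then show ?thesis using ne e by auto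
  qed
qed

lemma LD1:
  assumes cl: "\<forall>R. closed_under X R (C, D)" and c: "c \<in> C"
    and i: "inst R c = Some ([(u, s)], CDom [(v, t)])" and vX: "v \<in> X" and du: "D u = {s}"
  shows "D v \<subseteq> {t}"
proof -
  have pr: "\<forall>(x, s') \<in> set [(u, s)]. D x = {s'}" using du by simp
  show ?thesis by (rule L_dom[OF _ c i pr _ vX]) (use cl in auto)
qed

lemma LC:
  assumes cl: "\<forall>R. closed_under X R (C, D)" and c: "c \<in> C"
    and i: "inst R c = Some (P, CCon c')" and pr: "\<forall>(x, s) \<in> set P. D x = {s}"
    and ns: "\<not> solved D c'"
  shows "\<exists>c''\<in>C. \<not> solved D c'' \<and> restr D c'' = restr D c'"
  using L_con[OF _ c i pr ns] cl by blast

lemma eq_facts: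
  assumes cl: "\<forall>R. closed_under X R (C, D)" and c: "CEq x y \<in> C" and X: "x \<in> X" "y \<in> X"
  shows "(D x = {True} \<longrightarrow> D y \<subseteq> {True}) \<and> (D y = {True} \<longrightarrow> D x \<subseteq> {True}) \<and>
         (D x = {False} \<longrightarrow> D y \<subseteq> {False}) \<and> (D y = {False} \<longrightarrow> D x \<subseteq> {False})"
proof -
  have i: "inst EQU1 (CEq x y) = Some ([(x,True)], CDom [(y,True)])"
    "inst EQU2 (CEq x y) = Some ([(y,True)], CDom [(x,True)])"
    "inst EQU3 (CEq x y) = Some ([(x,False)], CDom [(y,False)])"
    "inst EQU4 (CEq x y) = Some ([(y,False)], CDom [(x,False)])" by simp_all
  show ?thesis
    by (intro conjI impI LD1[OF cl c i(1) X(2)] LD1[OF cl c i(2) X(1)]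
      LD1[OF cl c i(3) X(2)] LD1[OF cl c i(4) X(1)])
qed

lemma not_facts:
  assumes cl: "\<forall>R. closed_under X R (C, D)" and c: "CNot x y \<in> C" and X: "x \<in> X" "y \<in> X"
  shows "(D x = {True} \<longrightarrow> D y \<subseteq> {False}) \<and> (D x = {False} \<longrightarrow> D y \<subseteq> {True}) \<and>
         (D y = {True} \<longrightarrow> D x \<subseteq> {False}) \<and> (D y = {False} \<longrightarrow> D x \<subseteq> {True})"
proof -
  have i: "inst NOT1 (CNot x y) = Some ([(x,True)], CDom [(y,False)])"
    "inst NOT2 (CNot x y) = Some ([(x,False)], CDom [(y,True)])"
    "inst NOT3 (CNot x y) = Some ([(y,True)], CDom [(x,False)])"
    "inst NOT4 (CNot x y) = Some ([(y,False)], CDom [(x,True)])" by simp_all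
  show ?thesis
    by (intro conjI impI LD1[OF cl c i(1) X(2)] LD1[OF cl c i(2) X(2)]
      LD1[OF cl c i(3) X(1)] LD1[OF cl c i(4) X(1)])
qed

lemma eqcon_facts:
  assumes cl: "\<forall>R. closed_under X R (C, D)" and c: "c \<in> C"
    and i: "inst R c = Some ([(u, s)], CCon (CEq y z))" and du: "D u = {s}"
    and X: "y \<in> X" "z \<in> X" and yz: "y \<noteq> z" and ne: "\<forall>v\<in>X. D v \<noteq> {}"
  shows "(\<forall>p\<in>D y. \<forall>q\<in>D z. p = q) \<or> ((D y = {True} \<longrightarrow> D z \<subseteq> {True}) \<and> (D z = {True} \<longrightarrow> D y \<subseteq> {True}) \<and>
         (D y = {False} \<longrightarrow> D z \<subseteq> {False}) \<and> (D z = {False} \<longrightarrow> D y \<subseteq> {False}))"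
proof (cases "solved D (CEq y z)")
  case True
  then have "\<forall>p\<in>D y. \<forall>q\<in>D z. p = q" using solved_eq[OF yz] by simp
  then show ?thesis by (rule disjI1)
next
  case False
  have pr: "\<forall>(x, s') \<in> set [(u, s)]. D x = {s'}" using du by simp
  obtain c'' where c'': "c'' \<in> C" "restr D c'' = restr D (CEq y z)"
    using LC[OF cl c i pr False] by blast
  have "D y \<noteq> {}" "D z \<noteq> {}" using ne X by auto
  then have "c'' = CEq y z" by (rule restr_eq_CEq[OF yz _ _ c''(2)])
  then have "CEq y z \<in> C" using c''(1) by simp
  then show ?thesis by (rule disjI2[OF eq_facts[OF cl _ X]])
qed

lemma hac_CEq:
  assumes cl: "\<forall>R. closed_under X R (C, D)" and c: "CEq x y \<in> C" and X: "x \<in> X" "y \<in> X"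
    and xy: "x \<noteq> y" and ne: "\<forall>v\<in>X. D v \<noteq> {}"
  shows "hac_constr D (CEq x y)"
proof -
  note F = eq_facts[OF cl c X]
  have "D x = {True} \<or> D x = {False} \<or> D x = UNIV" "D y = {True} \<or> D y = {False} \<or> D y = UNIV"
    using bool_set_cases ne X by auto
  then show ?thesis
    unfolding hac2[OF xy, of "CEq x y" "(=)", OF scheme.simps(1) sat.simps(1)]
    using F by (elim disjE; simp add: UNIV_bool ex_bool_eq all_bool_eq)
qed

lemma hac_CNot:
  assumes cl: "\<forall>R. closed_under X R (C, D)" and c: "CNot x y \<in> C" and X: "x \<in> X" "y \<in> X"
    and xy: "x \<noteq> y" and ne: "\<forall>v\<in>X. D v \<noteq> {}"
  shows "hac_constr D (CNot x y)"
proof -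
  note F = not_facts[OF cl c X]
  have "D x = {True} \<or> D x = {False} \<or> D x = UNIV" "D y = {True} \<or> D y = {False} \<or> D y = UNIV"
    using bool_set_cases ne X by auto
  then show ?thesis
    unfolding hac2[OF xy, of "CNot x y" "\<lambda>p q. (\<not>p) = q", OF scheme.simps(2) sat.simps(2)]
    using F by (elim disjE; simp add: UNIV_bool ex_bool_eq all_bool_eq)
qed

lemma hac_CAnd:
  assumes cl: "\<forall>R. closed_under X R (C, D)" and c: "CAnd x y z \<in> C" and X: "x \<in> X" "y \<in> X" "z \<in> X"
    and d: "distinct [x,y,z]" and ne: "\<forall>v\<in>X. D v \<noteq> {}"
  shows "hac_constr D (CAnd x y z)"
proof -
  have i: "inst AND4 (CAnd x y z) = Some ([(x,False)], CDom [(z,False)])"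
    "inst AND5 (CAnd x y z) = Some ([(y,False)], CDom [(z,False)])"
    "inst AND3' (CAnd x y z) = Some ([(z,True)], CDom [(x,True)])"
    "inst AND6' (CAnd x y z) = Some ([(z,True)], CDom [(y,True)])"
    "inst AND1' (CAnd x y z) = Some ([(x,True)], CCon (CEq y z))"
    "inst AND2' (CAnd x y z) = Some ([(y,True)], CCon (CEq x z))" by simp_all
  have F1: "D x = {False} \<longrightarrow> D z \<subseteq> {False}"
    by (intro impI LD1[OF cl c i(1) X(3)])
  have F2: "D y = {False} \<longrightarrow> D z \<subseteq> {False}"
    by (intro impI LD1[OF cl c i(2) X(3)])
  have F3: "D z = {True} \<longrightarrow> D x \<subseteq> {True}"
    by (intro impI LD1[OF cl c i(3) X(1)])
  have F4: "D z = {True} \<longrightarrow> D y \<subseteq> {True}"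
    by (intro impI LD1[OF cl c i(4) X(2)])
  note F = F1 F2 F3 F4
  have yz: "y \<noteq> z" and xz: "x \<noteq> z" using d by auto
  have G1: "D x = {True} \<longrightarrow> ((\<forall>p\<in>D y. \<forall>q\<in>D z. p = q) \<or> ((D y = {True} \<longrightarrow> D z \<subseteq> {True}) \<and> (D z = {True} \<longrightarrow> D y \<subseteq> {True}) \<and>
         (D y = {False} \<longrightarrow> D z \<subseteq> {False}) \<and> (D z = {False} \<longrightarrow> D y \<subseteq> {False})))"
    by (intro impI eqcon_facts[OF cl c i(5) _ X(2) X(3) yz ne])
  have G2: "D y = {True} \<longrightarrow> ((\<forall>p\<in>D x. \<forall>q\<in>D z. p = q) \<or> ((D x = {True} \<longrightarrow> D z \<subseteq> {True}) \<and> (D z = {True} \<longrightarrow> D x \<subseteq> {True}) \<and>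
         (D x = {False} \<longrightarrow> D z \<subseteq> {False}) \<and> (D z = {False} \<longrightarrow> D x \<subseteq> {False})))"
    by (intro impI eqcon_facts[OF cl c i(6) _ X(1) X(3) xz ne])
  have "D x = {True} \<or> D x = {False} \<or> D x = UNIV" "D y = {True} \<or> D y = {False} \<or> D y = UNIV"
    "D z = {True} \<or> D z = {False} \<or> D z = UNIV"
    using bool_set_cases ne X by auto
  then show ?thesis
    unfolding hac3[OF d, of "CAnd x y z" "\<lambda>p q r. (p \<and> q) = r", OF scheme.simps(3) sat.simps(3)]
    using F G1 G2 by (elim disjE; simp add: UNIV_bool ex_bool_eq all_bool_eq)
qed

lemma hac_COr:
  assumes cl: "\<forall>R. closed_under X R (C, D)" and c: "COr x y z \<in> C" and X: "x \<in> X" "y \<in> X" "z \<in> X"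
    and d: "distinct [x,y,z]" and ne: "\<forall>v\<in>X. D v \<noteq> {}"
  shows "hac_constr D (COr x y z)"
proof -
  have i: "inst OR1 (COr x y z) = Some ([(x,True)], CDom [(z,True)])"
    "inst OR5 (COr x y z) = Some ([(y,True)], CDom [(z,True)])"
    "inst OR4' (COr x y z) = Some ([(z,False)], CDom [(x,False)])"
    "inst OR6' (COr x y z) = Some ([(z,False)], CDom [(y,False)])"
    "inst OR2' (COr x y z) = Some ([(x,False)], CCon (CEq y z))"
    "inst OR3' (COr x y z) = Some ([(y,False)], CCon (CEq x z))" by simp_all
  have F1: "D x = {True} \<longrightarrow> D z \<subseteq> {True}"
    by (intro impI LD1[OF cl c i(1) X(3)])
  have F2: "D y = {True} \<longrightarrow> D z \<subseteq> {True}"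
    by (intro impI LD1[OF cl c i(2) X(3)])
  have F3: "D z = {False} \<longrightarrow> D x \<subseteq> {False}"
    by (intro impI LD1[OF cl c i(3) X(1)])
  have F4: "D z = {False} \<longrightarrow> D y \<subseteq> {False}"
    by (intro impI LD1[OF cl c i(4) X(2)])
  note F = F1 F2 F3 F4
  have yz: "y \<noteq> z" and xz: "x \<noteq> z" using d by auto
  have G1: "D x = {False} \<longrightarrow> ((\<forall>p\<in>D y. \<forall>q\<in>D z. p = q) \<or> ((D y = {True} \<longrightarrow> D z \<subseteq> {True}) \<and> (D z = {True} \<longrightarrow> D y \<subseteq> {True}) \<and>
         (D y = {False} \<longrightarrow> D z \<subseteq> {False}) \<and> (D z = {False} \<longrightarrow> D y \<subseteq> {False})))"
    by (intro impI eqcon_facts[OF cl c i(5) _ X(2) X(3) yz ne])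
  have G2: "D y = {False} \<longrightarrow> ((\<forall>p\<in>D x. \<forall>q\<in>D z. p = q) \<or> ((D x = {True} \<longrightarrow> D z \<subseteq> {True}) \<and> (D z = {True} \<longrightarrow> D x \<subseteq> {True}) \<and>
         (D x = {False} \<longrightarrow> D z \<subseteq> {False}) \<and> (D z = {False} \<longrightarrow> D x \<subseteq> {False})))"
    by (intro impI eqcon_facts[OF cl c i(6) _ X(1) X(3) xz ne])
  have "D x = {True} \<or> D x = {False} \<or> D x = UNIV" "D y = {True} \<or> D y = {False} \<or> D y = UNIV"
    "D z = {True} \<or> D z = {False} \<or> D z = UNIV"
    using bool_set_cases ne X by auto
  then show ?thesis
    unfolding hac3[OF d, of "COr x y z" "\<lambda>p q r. (p \<or> q) = r", OF scheme.simps(4) sat.simps(4)]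
    using F G1 G2 by (elim disjE; simp add: UNIV_bool ex_bool_eq all_bool_eq)
qed

theorem theorem5:
  fixes X :: "'v set" and \<phi> :: "'v csp"
  assumes "well_formed X \<phi>"
    and "\<not> failed X \<phi>"
    and "\<forall>R. closed_under X R \<phi>"
  shows "hyper_arc_consistent \<phi>"
proof -
  obtain C D where phi: "\<phi> = (C, D)" by (cases \<phi>)
  have cl: "\<forall>R. closed_under X R (C, D)" using assms(3) phi by simp
  have ne: "\<forall>v\<in>X. D v \<noteq> {}" using assms(2) phi unfolding failed_def by auto
  have wf: "\<forall>c\<in>C. distinct (scheme c) \<and> set (scheme c) \<subseteq> X"
    using assms(1) phi unfolding well_formed_def by auto
  show ?thesis unfolding phi hyper_arc_consistent_def fst_conv snd_conv
  proof
    fix c assume c: "c \<in> C"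
    show "hac_constr D c"
    proof (cases c)
      case (CEq x y) then show ?thesis using hac_CEq[OF cl, of x y] c wf ne by auto
    next
      case (CNot x y) then show ?thesis using hac_CNot[OF cl, of x y] c wf ne by auto
    next
      case (CAnd x y z) then show ?thesis using hac_CAnd[OF cl, of x y z] c wf ne by auto
    next
      case (COr x y z) then show ?thesis using hac_COr[OF cl, of x y z] c wf ne by auto
    qed
  qed
qed

end
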